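(* Let $G$ be a plane graph with a face $f$ whose facial walk $v_1v_2\dots v_rv_1$ has length $r\ge3$, and let $G'$ be obtained from $G$ by attaching a web to $f$. Then (i) for any $u,v\in V(G)$, $\mathrm{dist}_{G'}(u,v)=\mathrm{dist}_G(u,v)$, and moreover no shortest $(u,v)$-path in $G'$ contains an inner vertex of the attached web; (ii) for every vertex $v$ of the attached web there is a vertex $u\in V(G)$ with $\mathrm{dist}_{G'}(u,v)\le r$.
   Context: For $r\ge3$, the web $W_r(v_1,\dots,v_r)$ is the graph constructed as follows: take vertices $v_1,\dots,v_r$ and $u$; for each $i\in\{1,\dots,r\}$ add a path $x^i_0x^i_1\dots x^i_r$ of length $r$ with $x^i_0=v_i$ and $x^i_r=u$; for each $j\in\{1,\dots,r-1\}$ add the cycle $x^1_jx^2_j\dots x^r_jx^1_j$; for each $i\in\{1,\dots,r\}$ and $j\in\{1,\dots,r-1\}$ add the edge $\{x^{i-1}_{j-1},x^i_j\}$, where indices are such that $x^0_j=x^r_j$. The inner vertices of the web are all its vertices other than $v_1,\dots,v_r$. Attaching a web to a face $f$ with facial walk $v_1\dots v_rv_1$ means adding a copy of $W_r(v_1,\dots,v_r)$ whose vertices $v_1,\dots,v_r$ are identified with the vertices of the facial walk (vertices may repeat in the walk) and drawing it inside $f$ without crossings, with the concentric cycles nested around the center $u$. Distances are unweighted shortest-path distances. *)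

theory Defs
  imports Main "HOL-Library.Extended_Nat"
begin

definition simple_graph :: "'a set \<Rightarrow> ('a \<Rightarrow> 'a \<Rightarrow> bool) \<Rightarrow> bool" where
  "simple_graph V E \<longleftrightarrow> finite V \<and> (\<forall>x y. E x y \<longrightarrow> x \<in> V \<and> y \<in> V \<and> x \<noteq> y \<and> E y x)"

definition walk_betw :: "('a \<Rightarrow> 'a \<Rightarrow> bool) \<Rightarrow> 'a \<Rightarrow> 'a list \<Rightarrow> 'a \<Rightarrow> bool" where
  "walk_betw E u p w \<longleftrightarrow> p \<noteq> [] \<and> hd p = u \<and> last p = w \<and>
     (\<forall>i. Suc i < length p \<longrightarrow> E (p ! i) (p ! Suc i))"

text \<open>Unweighted shortest-path distance (infinity if no walk exists).\<close>
definition dist :: "('a \<Rightarrow> 'a \<Rightarrow> bool) \<Rightarrow> 'a \<Rightarrow> 'a \<Rightarrow> enat" where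
  "dist E u w = (INF p \<in> {p. walk_betw E u p w}. enat (length p - 1))"

definition shortest_path :: "('a \<Rightarrow> 'a \<Rightarrow> bool) \<Rightarrow> 'a \<Rightarrow> 'a list \<Rightarrow> 'a \<Rightarrow> bool" where
  "shortest_path E u p w \<longleftrightarrow> walk_betw E u p w \<and> distinct p \<and> enat (length p - 1) = dist E u w"

text \<open>Indices are 0-based: \<open>v i\<close> (for \<open>i < r\<close>) is
  the paper's \<open>v_{i+1}\<close>, and the first index of \<open>x\<close> is taken modulo \<open>r\<close>.
  Vertices of the new graph have type \<open>'a + nat \<times> nat\<close>: \<open>Inl a\<close> is the old vertex \<open>a\<close>,
  \<open>Inr (i,j)\<close> with \<open>0 < j < r\<close> is the inner vertex \<open>x^i_j\<close>, \<open>Inr (0,r)\<close> is the centre \<open>u\<close>.\<close>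

definition web_vtx :: "(nat \<Rightarrow> 'a) \<Rightarrow> nat \<Rightarrow> nat \<Rightarrow> nat \<Rightarrow> 'a + nat \<times> nat" where
  "web_vtx v r i j = (if j = 0 then Inl (v (i mod r)) else if j = r then Inr (0, r)
                      else Inr (i mod r, j))"

definition web_vertices :: "(nat \<Rightarrow> 'a) \<Rightarrow> nat \<Rightarrow> ('a + nat \<times> nat) set" where
  "web_vertices v r = {web_vtx v r i j | i j. i < r \<and> j \<le> r}"

definition web_inner_vertices :: "(nat \<Rightarrow> 'a) \<Rightarrow> nat \<Rightarrow> ('a + nat \<times> nat) set" where
  "web_inner_vertices v r = {web_vtx v r i j | i j. i < r \<and> 0 < j \<and> j \<le> r}"

definition web_edge :: "(nat \<Rightarrow> 'a) \<Rightarrow> nat \<Rightarrow> 'a + nat \<times> nat \<Rightarrow> 'a + nat \<times> nat \<Rightarrow> bool" where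
  "web_edge v r a b \<longleftrightarrow>
     (\<exists>i j. i < r \<and> j < r \<and> a = web_vtx v r i j \<and> b = web_vtx v r i (Suc j)) \<or>
     (\<exists>i j. i < r \<and> 1 \<le> j \<and> j \<le> r - 1 \<and> a = web_vtx v r i j \<and> b = web_vtx v r (Suc i) j) \<or>
     (\<exists>i j. i < r \<and> 1 \<le> j \<and> j \<le> r - 1 \<and> a = web_vtx v r (i + r - 1) (j - 1) \<and> b = web_vtx v r i j)"

definition attach_web_V :: "'a set \<Rightarrow> (nat \<Rightarrow> 'a) \<Rightarrow> nat \<Rightarrow> ('a + nat \<times> nat) set" where
  "attach_web_V V v r = Inl ` V \<union> web_vertices v r"

definition attach_web_E :: "('a \<Rightarrow> 'a \<Rightarrow> bool) \<Rightarrow> (nat \<Rightarrow> 'a) \<Rightarrow> nat \<Rightarrow>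
    'a + nat \<times> nat \<Rightarrow> 'a + nat \<times> nat \<Rightarrow> bool" where
  "attach_web_E E v r a b \<longleftrightarrow>
     (\<exists>x y. a = Inl x \<and> b = Inl y \<and> E x y) \<or> web_edge v r a b \<or> web_edge v r b a"

end

theory Submission
  imports Defs
begin

definition nxt :: "nat \<Rightarrow> nat \<Rightarrow> nat" where "nxt r i = (if Suc i = r then 0 else Suc i)"
definition prv :: "nat \<Rightarrow> nat \<Rightarrow> nat" where "prv r i = (if i = 0 then r - 1 else i - 1)"
definition off :: "nat \<Rightarrow> nat \<Rightarrow> nat \<Rightarrow> nat" where "off r i k = (if k \<le> i then i - k else i + r - k)"

lemma nxt_mod: "i < r \<Longrightarrow> Suc i mod r = nxt r i"
  by (auto simp: nxt_def)
lemma prv_mod: "i < r \<Longrightarrow> (i + r - 1) mod r = prv r i"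
  by (cases i) (auto simp: prv_def)
lemma nxt_lt: "i < r \<Longrightarrow> nxt r i < r" by (auto simp: nxt_def)
lemma prv_lt: "i < r \<Longrightarrow> prv r i < r" by (auto simp: prv_def)
lemma prv_nxt: "i < r \<Longrightarrow> prv r (nxt r i) = i" by (auto simp: prv_def nxt_def)
lemma nxt_prv: "i < r \<Longrightarrow> nxt r (prv r i) = i" by (auto simp: prv_def nxt_def)
lemma off_lt: "i < r \<Longrightarrow> k < r \<Longrightarrow> off r i k < r" by (auto simp: off_def)
lemma off_0: "i < r \<Longrightarrow> k < r \<Longrightarrow> off r i k = 0 \<longleftrightarrow> k = i" by (auto simp: off_def)
lemma off_self: "off r i i = 0" by (auto simp: off_def)
lemma off_Suc_nxt: "i < r \<Longrightarrow> k < r \<Longrightarrow> off r i k = Suc t \<Longrightarrow> off r i (nxt r k) = t"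
  by (auto simp: off_def nxt_def split: if_splits)
lemma off_Suc_prv: "i < r \<Longrightarrow> k < r \<Longrightarrow> off r i k = Suc t \<Longrightarrow> off r (prv r i) k = t"
  by (auto simp: off_def prv_def split: if_splits)
lemma off_prv_up: "i < r \<Longrightarrow> k < r \<Longrightarrow> off r (prv r i) k < r - 1 \<Longrightarrow> off r i k = Suc (off r (prv r i) k)"
  by (auto simp: off_def prv_def split: if_splits)
lemma off_nxt_nxt: "i < r \<Longrightarrow> k < r \<Longrightarrow> off r (nxt r i) (nxt r k) = off r i k"
  by (auto simp: off_def nxt_def split: if_splits)
lemma off_prv_prv: "i < r \<Longrightarrow> k < r \<Longrightarrow> off r (prv r i) (prv r k) = off r i k"
  by (auto simp: off_def prv_def split: if_splits)
lemma off_i_prv: "2 \<le> r \<Longrightarrow> i < r \<Longrightarrow> off r i (prv r i) = 1"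
  by (auto simp: off_def prv_def split: if_splits)

lemma wv_mod: "web_vtx v r (i mod r) j = web_vtx v r i j"
  by (simp add: web_vtx_def)
lemma wv_can: "i < r \<Longrightarrow> web_vtx v r i j = (if j=0 then Inl (v i) else if j=r then Inr(0,r) else Inr(i,j))"
  by (simp add: web_vtx_def)
lemma wv_inj: "i < r \<Longrightarrow> i' < r \<Longrightarrow> 1 \<le> j \<Longrightarrow> j \<le> r \<Longrightarrow> 1 \<le> j' \<Longrightarrow> j' \<le> r \<Longrightarrow>
   web_vtx v r i j = web_vtx v r i' j' \<Longrightarrow> j = j' \<and> (j < r \<longrightarrow> i = i')"
  by (auto simp: wv_can split: if_splits)
lemma wv_Inr: "j \<noteq> 0 \<Longrightarrow> \<exists>z. web_vtx v r i j = Inr z"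
  by (cases "j = r") (auto simp: web_vtx_def)
lemma web_edge_Inr: "web_edge v r x y \<Longrightarrow> \<exists>z. y = Inr z"
  unfolding web_edge_def by (auto simp: web_vtx_def)

lemma walk_snoc: "walk_betw E a q b \<Longrightarrow> E b c \<Longrightarrow> walk_betw E a (q @ [c]) c"
  unfolding walk_betw_def
  apply (auto simp: nth_append hd_append last_conv_nth less_Suc_eq)
  apply (subgoal_tac "i = length q - Suc 0")
   apply simp
  by arith

lemma walk_butlast: "walk_betw E x (p @ [y]) w \<Longrightarrow> p \<noteq> [] \<Longrightarrow> walk_betw E x p (last p) \<and> E (last p) y \<and> w = y"
proof -
  assume w: "walk_betw E x (p @ [y]) w" and p: "p \<noteq> []"
  have e: "\<And>i. Suc i < length (p@[y]) \<Longrightarrow> E ((p@[y]) ! i) ((p@[y]) ! Suc i)" using w by (auto simp: walk_betw_def)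
  have 1: "\<And>i. Suc i < length p \<Longrightarrow> E (p ! i) (p ! Suc i)"
    using e by (metis Suc_lessD length_append_singleton less_SucI nth_append)
  have 2: "E (last p) y" using e[of "length p - 1"] p by (simp add: nth_append last_conv_nth)
  show ?thesis using w p 1 2 by (auto simp: walk_betw_def hd_append)
qed


definition Fin :: "('a \<Rightarrow> 'a \<Rightarrow> bool) \<Rightarrow> (nat \<Rightarrow> 'a) \<Rightarrow> nat \<Rightarrow> 'a \<Rightarrow> 'a + nat \<times> nat \<Rightarrow> nat \<Rightarrow> bool" where
  "Fin E v r a x m \<longleftrightarrow> (\<exists>k q. k < r \<and> walk_betw E a q (v k) \<and>
     (\<forall>i j. i < r \<longrightarrow> 1 \<le> j \<longrightarrow> j \<le> r \<longrightarrow> x = web_vtx v r i j \<longrightarrow> off r i k \<le> j \<and> length q + j \<le> m))"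

definition Out :: "('a \<Rightarrow> 'a \<Rightarrow> bool) \<Rightarrow> (nat \<Rightarrow> 'a) \<Rightarrow> nat \<Rightarrow> 'a \<Rightarrow> 'a + nat \<times> nat \<Rightarrow> nat \<Rightarrow> bool" where
  "Out E v r a y m = (case y of Inl c \<Rightarrow> \<exists>q. walk_betw E a q c \<and> length q \<le> m
                                | Inr _ \<Rightarrow> Fin E v r a y (Suc m))"

lemma Fin_intro:
  assumes "0 < r" "k < r" "walk_betw E a q (v k)" "iy < r" "1 \<le> jy" "jy \<le> r" "y = web_vtx v r iy jy"
    "jy < r \<Longrightarrow> off r iy k \<le> jy" "length q + jy \<le> m"
  shows "Fin E v r a y m"
  unfolding Fin_def
proof (intro exI conjI allI impI)
  show "k < r" "walk_betw E a q (v k)" by fact+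
  fix i j assume h: "i < r" "1 \<le> j" "j \<le> r" "y = web_vtx v r i j"
  then have "jy = j \<and> (jy < r \<longrightarrow> iy = i)" using wv_inj[of iy r i jy j v] assms by auto
  then show "off r i k \<le> j" "length q + j \<le> m" using assms off_lt[of i r k] h by (auto simp: le_less)
qed

lemma Fin_elim:
  assumes "Fin E v r a (web_vtx v r i j) m" "i < r" "1 \<le> j" "j \<le> r"
  obtains k q where "k < r" "walk_betw E a q (v k)" "off r i k \<le> j" "length q + j \<le> m"
  using assms unfolding Fin_def by blast

lemma Out_Inr: "y = Inr z \<Longrightarrow> Fin E v r a y (Suc m) \<Longrightarrow> Out E v r a y m"
  by (simp add: Out_def)
lemma Out_Inl: "y = Inl c \<Longrightarrow> walk_betw E a q c \<Longrightarrow> length q \<le> m \<Longrightarrow> Out E v r a y m"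
  by (auto simp: Out_def)

context
  fixes V :: "'a set" and E :: "'a \<Rightarrow> 'a \<Rightarrow> bool" and v :: "nat \<Rightarrow> 'a" and r :: nat
  assumes G: "simple_graph V E"
    and r3: "r \<ge> 3"
    and walk: "\<forall>i < r. E (v i) (v (Suc i mod r))"
begin

lemma Esym: "E x y \<Longrightarrow> E y x" using G by (auto simp: simple_graph_def)
lemma bE1: "k < r \<Longrightarrow> E (v k) (v (nxt r k))" using walk nxt_mod by metis
lemma bE2: "k < r \<Longrightarrow> E (v (nxt r k)) (v k)" using bE1 Esym by blast
lemma bE3: "k < r \<Longrightarrow> E (v k) (v (prv r k))" using bE2[of "prv r k"] nxt_prv prv_lt by metis
lemma vV: "k < r \<Longrightarrow> v k \<in> V" using bE1 G by (auto simp: simple_graph_def)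

lemma S_up:
  assumes "i < r" "j < r" "1 \<le> j" "Fin E v r a (web_vtx v r i j) m"
  shows "Out E v r a (web_vtx v r i (Suc j)) m"
proof -
  obtain k q where k: "k < r" "walk_betw E a q (v k)" "off r i k \<le> j" "length q + j \<le> m"
    using Fin_elim[OF assms(4)] assms by auto
  obtain z where z: "web_vtx v r i (Suc j) = Inr z" using wv_Inr by blast
  show ?thesis
    by (rule Out_Inr[OF z], rule Fin_intro[of r k E a q v i "Suc j"]) (use assms k r3 in auto)
qed

lemma S_down:
  assumes "i < r" "j < r" "Fin E v r a (web_vtx v r i (Suc j)) m"
  shows "Out E v r a (web_vtx v r i j) m"
proof -
  obtain k q where k: "k < r" "walk_betw E a q (v k)" "off r i k \<le> Suc j" "length q + Suc j \<le> m"
    using Fin_elim[OF assms(3)] assms by auto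
  show ?thesis
  proof (cases "j = 0")
    case True
    then have y: "web_vtx v r i j = Inl (v i)" using assms by (simp add: wv_can)
    show ?thesis
    proof (cases "off r i k = 0")
      case True
      then have "k = i" using off_0 assms k by blast
      then show ?thesis using Out_Inl[OF y, of E a q] k \<open>j = 0\<close> by simp
    next
      case False
      then have "off r i k = Suc 0" using k \<open>j=0\<close> by simp
      then have "nxt r k = i" using off_Suc_nxt[of i r k 0] off_0 nxt_lt k assms by metis
      then show ?thesis using Out_Inl[OF y, of E a "q @ [v (nxt r k)]"] walk_snoc[OF k(2) bE1[OF k(1)]] k by simp
    qed
  next
    case False
    obtain z where z: "web_vtx v r i j = Inr z" using False wv_Inr by blast
    show ?thesis
    proof (cases "off r i k \<le> j")
      case True
      show ?thesis
        by (rule Out_Inr[OF z], rule Fin_intro[of r k E a q v i j]) (use assms k r3 True False in auto)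
    next
      case F2: False
      then have o: "off r i k = Suc j" using k by simp
      show ?thesis
        by (rule Out_Inr[OF z], rule Fin_intro[of r "nxt r k" E a "q @ [v (nxt r k)]" v i j])
          (use assms k r3 False off_Suc_nxt[OF _ _ o] nxt_lt walk_snoc[OF k(2) bE1[OF k(1)]] in auto)
    qed
  qed
qed


lemma C_fwd:
  assumes "i < r" "1 \<le> j" "j < r" "Fin E v r a (web_vtx v r i j) m"
  shows "Out E v r a (web_vtx v r (nxt r i) j) m"
proof -
  obtain k q where k: "k < r" "walk_betw E a q (v k)" "off r i k \<le> j" "length q + j \<le> m"
    using Fin_elim[OF assms(4)] assms by auto
  obtain z where z: "web_vtx v r (nxt r i) j = Inr z" using assms wv_Inr by (metis not_one_le_zero)
  show ?thesis
    by (rule Out_Inr[OF z], rule Fin_intro[of r "nxt r k" E a "q @ [v (nxt r k)]" v "nxt r i" j])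
      (use assms k r3 off_nxt_nxt nxt_lt walk_snoc[OF k(2) bE1[OF k(1)]] in auto)
qed

lemma C_bwd:
  assumes "i < r" "1 \<le> j" "j < r" "Fin E v r a (web_vtx v r (nxt r i) j) m"
  shows "Out E v r a (web_vtx v r i j) m"
proof -
  obtain k q where k: "k < r" "walk_betw E a q (v k)" "off r (nxt r i) k \<le> j" "length q + j \<le> m"
    using Fin_elim[OF assms(4)] assms nxt_lt by auto
  obtain z where z: "web_vtx v r i j = Inr z" using assms wv_Inr by (metis not_one_le_zero)
  have o: "off r i (prv r k) = off r (nxt r i) k"
    using off_prv_prv[of "nxt r i" r k] prv_nxt nxt_lt assms k by metis
  show ?thesis
    by (rule Out_Inr[OF z], rule Fin_intro[of r "prv r k" E a "q @ [v (prv r k)]" v i j])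
      (use assms k r3 o prv_lt walk_snoc[OF k(2) bE3[OF k(1)]] in auto)
qed

lemma D_fwd:
  assumes "i < r" "2 \<le> j" "j < r" "Fin E v r a (web_vtx v r (prv r i) (j - 1)) m"
  shows "Out E v r a (web_vtx v r i j) m"
proof -
  obtain k q where k: "k < r" "walk_betw E a q (v k)" "off r (prv r i) k \<le> j - 1" "length q + (j - 1) \<le> m"
  proof -
    have 1: "1 \<le> j - 1" "j - 1 \<le> r" using assms by auto
    show ?thesis using Fin_elim[OF assms(4) prv_lt[OF assms(1)] 1] that by blast
  qed
  obtain z where z: "web_vtx v r i j = Inr z" using assms wv_Inr by (metis not_numeral_le_zero)
  have o: "off r i k = Suc (off r (prv r i) k)"
    using off_prv_up[of i r k] assms k by auto
  show ?thesis
    by (rule Out_Inr[OF z], rule Fin_intro[of r k E a q v i j])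
      (use assms k r3 o in auto)
qed

lemma D_bwd:
  assumes "i < r" "1 \<le> j" "j < r" "Fin E v r a (web_vtx v r i j) m"
  shows "Out E v r a (web_vtx v r (prv r i) (j - 1)) m"
proof -
  obtain k q where k: "k < r" "walk_betw E a q (v k)" "off r i k \<le> j" "length q + j \<le> m"
    using Fin_elim[OF assms(4)] assms by auto
  show ?thesis
  proof (cases "j = 1")
    case True
    then have y: "web_vtx v r (prv r i) (j - 1) = Inl (v (prv r i))" using assms prv_lt by (simp add: wv_can)
    show ?thesis
    proof (cases "off r i k = 0")
      case True
      then have "k = i" using off_0 assms k by blast
      then show ?thesis using Out_Inl[OF y, of E a "q @ [v (prv r i)]"] walk_snoc[OF k(2) bE3[OF k(1)]] k \<open>j = 1\<close> by simp
    next
      case False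
      then have "off r i k = Suc 0" using k \<open>j=1\<close> by simp
      then have "prv r i = k" using off_Suc_prv[of i r k 0] off_0 prv_lt k assms by metis
      then show ?thesis using Out_Inl[OF y, of E a q] k \<open>j=1\<close> by simp
    qed
  next
    case False
    obtain z where z: "web_vtx v r (prv r i) (j - 1) = Inr z" using False assms wv_Inr by (metis diff_is_0_eq le_antisym)
    show ?thesis
    proof (cases "off r i k = 0")
      case F2: False
      then obtain t where t: "off r i k = Suc t" by (cases "off r i k") auto
      show ?thesis
        by (rule Out_Inr[OF z], rule Fin_intro[of r k E a q v "prv r i" "j - 1"])
          (use assms k r3 False off_Suc_prv[OF _ _ t] prv_lt t in auto)
    next
      case True
      then have "k = i" using off_0 assms k by blast
      then have o: "off r (prv r i) (prv r k) = 0" using off_self by simp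
      show ?thesis
        by (rule Out_Inr[OF z], rule Fin_intro[of r "prv r k" E a "q @ [v (prv r k)]" v "prv r i" "j - 1"])
          (use assms k r3 False o prv_lt walk_snoc[OF k(2) bE3[OF k(1)]] in auto)
    qed
  qed
qed


lemma wv_Suc: "i < r \<Longrightarrow> web_vtx v r (Suc i) j = web_vtx v r (nxt r i) j"
  by (metis nxt_mod wv_mod)
lemma wv_prv: "i < r \<Longrightarrow> web_vtx v r (i + r - 1) j = web_vtx v r (prv r i) j"
  by (metis prv_mod wv_mod)
lemma wv0: "web_vtx v r i 0 = Inl (v (i mod r))" by (simp add: web_vtx_def)
lemma wv_Inl_iff: "web_vtx v r i j = Inl c \<longleftrightarrow> j = 0 \<and> c = v (i mod r)"
  by (auto simp: web_vtx_def)

lemma inner_step: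
  assumes "Fin E v r a x m" "x = Inr z" "attach_web_E E v r x y"
  shows "Out E v r a y m"
proof -
  have "web_edge v r x y \<or> web_edge v r y x" using assms(2,3) by (auto simp: attach_web_E_def)
  then show ?thesis
  proof
    assume "web_edge v r x y"
    then consider
      (s) i j where "i < r" "j < r" "x = web_vtx v r i j" "y = web_vtx v r i (Suc j)"
    | (c) i j where "i < r" "1 \<le> j" "j \<le> r - 1" "x = web_vtx v r i j" "y = web_vtx v r (Suc i) j"
    | (d) i j where "i < r" "1 \<le> j" "j \<le> r - 1" "x = web_vtx v r (i + r - 1) (j - 1)" "y = web_vtx v r i j"
      unfolding web_edge_def by blast
    then show ?thesis
    proof cases
      case s
      have "j \<noteq> 0"
      proof
        assume "j = 0" then show False using s(3) assms(2) by (simp add: wv0)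
      qed
      then show ?thesis using S_up[of i j a m] s assms(1) by simp
    next
      case c
      then show ?thesis using C_fwd[of i j a m] assms(1) r3 wv_Suc[of i j] by simp
    next
      case d
      have "j - 1 \<noteq> 0"
      proof
        assume "j - 1 = 0" then show False using d(4) assms(2) by (simp add: wv0)
      qed
      then show ?thesis using D_fwd[of i j a m] d assms(1) r3 wv_prv[of i "j - 1"] by simp
    qed
  next
    assume "web_edge v r y x"
    then consider
      (s) i j where "i < r" "j < r" "y = web_vtx v r i j" "x = web_vtx v r i (Suc j)"
    | (c) i j where "i < r" "1 \<le> j" "j \<le> r - 1" "y = web_vtx v r i j" "x = web_vtx v r (Suc i) j"
    | (d) i j where "i < r" "1 \<le> j" "j \<le> r - 1" "y = web_vtx v r (i + r - 1) (j - 1)" "x = web_vtx v r i j"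
      unfolding web_edge_def by blast
    then show ?thesis
    proof cases
      case s
      then show ?thesis using S_down[of i j a m] s assms(1) by simp
    next
      case c
      then show ?thesis using C_bwd[of i j a m] assms(1) r3 wv_Suc[of i j] by simp
    next
      case d
      then show ?thesis using D_bwd[of i j a m] d assms(1) r3 wv_prv[of i "j - 1"] by simp
    qed
  qed
qed

lemma entry_step:
  assumes "attach_web_E E v r (Inl b) y" "y = Inr z" "walk_betw E a q b" "length q \<le> m"
  shows "Fin E v r a y (Suc m)"
proof -
  have "web_edge v r (Inl b) y" using assms(1,2) web_edge_Inr[of v r y "Inl b"] unfolding attach_web_E_def by auto
  then consider
      (s) i j where "i < r" "j < r" "Inl b = web_vtx v r i j" "y = web_vtx v r i (Suc j)"
    | (c) i j where "i < r" "1 \<le> j" "j \<le> r - 1" "Inl b = web_vtx v r i j" "y = web_vtx v r (Suc i) j"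
    | (d) i j where "i < r" "1 \<le> j" "j \<le> r - 1" "Inl b = web_vtx v r (i + r - 1) (j - 1)" "y = web_vtx v r i j"
    unfolding web_edge_def by blast
  then show ?thesis
  proof cases
    case s
    then have "j = 0" "b = v i" using wv_Inl_iff[of i j b] by auto
    then show ?thesis
      by (intro Fin_intro[of r i E a q v i 1]) (use s assms r3 off_self in auto)
  next
    case c
    then show ?thesis using wv_Inl_iff[of i j b] by auto
  next
    case d
    then have "j = 1" "b = v (prv r i)" using wv_Inl_iff[of "i + r - 1" "j - 1" b] prv_mod[of i r] by auto
    then show ?thesis
      by (intro Fin_intro[of r "prv r i" E a q v i 1]) (use d assms r3 off_i_prv prv_lt in auto)
  qed
qed

lemma Inl_Inl: "attach_web_E E v r (Inl b) (Inl c) \<Longrightarrow> E b c"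
  using web_edge_Inr[of v r "Inl c" "Inl b"] web_edge_Inr[of v r "Inl b" "Inl c"] unfolding attach_web_E_def by auto

definition Inv :: "'a \<Rightarrow> ('a + nat \<times> nat) list \<Rightarrow> bool" where
  "Inv a p = (case last p of Inl b \<Rightarrow> \<exists>q. walk_betw E a q b \<and> length q \<le> length p \<and>
                                  ((\<exists>z. Inr z \<in> set p) \<longrightarrow> length q < length p)
                          | Inr z \<Rightarrow> Fin E v r a (last p) (length p))"

lemma main: "walk_betw (attach_web_E E v r) (Inl a) p w \<Longrightarrow> Inv a p"
proof (induction p arbitrary: w rule: rev_induct)
  case Nil
  then show ?case by (simp add: walk_betw_def)
next
  case (snoc y p)
  show ?case
  proof (cases "p = []")
    case True
    then have "y = Inl a" using snoc.prems by (simp add: walk_betw_def)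
    moreover have "walk_betw E a [a] a" by (simp add: walk_betw_def)
    ultimately show ?thesis using True by (auto simp: Inv_def)
  next
    case False
    from walk_butlast[OF snoc.prems False] have
      w: "walk_betw (attach_web_E E v r) (Inl a) p (last p)" and e: "attach_web_E E v r (last p) y" by auto
    have IH: "Inv a p" using snoc.IH[OF w] .
    show ?thesis
    proof (cases "last p")
      case (Inl b)
      then obtain q where q: "walk_betw E a q b" "length q \<le> length p"
         "(\<exists>z. Inr z \<in> set p) \<longrightarrow> length q < length p" using IH by (auto simp: Inv_def)
      show ?thesis
      proof (cases y)
        case (Inl c)
        have "E b c" using Inl_Inl[of b c] e \<open>last p = Inl b\<close> Inl by simp
        then have wq: "walk_betw E a (q @ [c]) c" using walk_snoc[OF q(1)] by blast
        have "\<not> (\<exists>z. Inr z \<in> set [y])" using Inl by simp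
        then have "(\<exists>z. Inr z \<in> set (p @ [y])) \<longrightarrow> length (q @ [c]) < length (p @ [y])" using q(3) by auto
        then show ?thesis using wq q(2) unfolding Inv_def last_snoc Inl sum.case(1)
          by (intro exI[of _ "q @ [c]"]) simp
      next
        case (Inr z)
        then have "Fin E v r a y (Suc (length p))" using entry_step[of b y z a q "length p"] e \<open>last p = Inl b\<close> q by simp
        then show ?thesis using Inr by (simp add: Inv_def)
      qed
    next
      case (Inr z)
      then have F: "Fin E v r a (last p) (length p)" using IH by (simp add: Inv_def)
      have O: "Out E v r a y (length p)" using inner_step[OF F Inr e] .
      have zin: "Inr z \<in> set p" using Inr False last_in_set by metis
      show ?thesis
      proof (cases y)
        case (Inl c)
        then show ?thesis using O zin by (auto simp: Inv_def Out_def)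
      next
        case (Inr z')
        then show ?thesis using O by (simp add: Inv_def Out_def)
      qed
    qed
  qed
qed


lemma main2:
  assumes "walk_betw (attach_web_E E v r) (Inl a) p (Inl b)"
  shows "\<exists>q. walk_betw E a q b \<and> length q \<le> length p \<and> ((\<exists>z. Inr z \<in> set p) \<longrightarrow> length q < length p)"
proof -
  have "Inv a p" using main[OF assms] .
  moreover have "last p = Inl b" using assms by (simp add: walk_betw_def)
  ultimately show ?thesis by (simp add: Inv_def)
qed

end

lemma walk_map_Inl:
  assumes "walk_betw E a q b"
  shows "walk_betw (attach_web_E E v r) (Inl a) (map Inl q) (Inl b)"
  using assms unfolding walk_betw_def attach_web_E_def by (auto simp: hd_map last_map)

theorem lemma9:
  fixes V :: "'a set" and E :: "'a \<Rightarrow> 'a \<Rightarrow> bool" and v :: "nat \<Rightarrow> 'a" and r :: nat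
  assumes G: "simple_graph V E"
    and r: "r \<ge> 3"
    and walk: "\<forall>i < r. E (v i) (v (Suc i mod r))"
  shows "(\<forall>a \<in> V. \<forall>b \<in> V.
            dist (attach_web_E E v r) (Inl a) (Inl b) = dist E a b \<and>
            (\<forall>p. shortest_path (attach_web_E E v r) (Inl a) p (Inl b) \<longrightarrow>
                 set p \<inter> web_inner_vertices v r = {}))
       \<and> (\<forall>x \<in> web_vertices v r. \<exists>a \<in> V. dist (attach_web_E E v r) (Inl a) x \<le> enat r)"
proof (intro conjI ballI allI impI)
  let ?E = "attach_web_E E v r"
  have deq: "dist ?E (Inl a) (Inl b) = dist E a b" for a b
  proof (rule antisym)
    show "dist ?E (Inl a) (Inl b) \<le> dist E a b"
      unfolding dist_def
    proof (rule INF_mono)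
      fix q assume "q \<in> {q. walk_betw E a q b}"
      then have "map Inl q \<in> {p. walk_betw ?E (Inl a) p (Inl b)}" using walk_map_Inl by fastforce
      then show "\<exists>p\<in>{p. walk_betw ?E (Inl a) p (Inl b)}. enat (length p - 1) \<le> enat (length q - 1)"
        by (intro bexI[of _ "map Inl q"]) auto
    qed
    show "dist E a b \<le> dist ?E (Inl a) (Inl b)"
      unfolding dist_def
    proof (rule INF_mono)
      fix p assume "p \<in> {p. walk_betw ?E (Inl a) p (Inl b)}"
      then obtain q where q: "walk_betw E a q b" "length q \<le> length p"
        using main2[OF G r walk] by blast
      then show "\<exists>q\<in>{q. walk_betw E a q b}. enat (length q - 1) \<le> enat (length p - 1)"
        by (intro bexI[of _ q]) auto
    qed
  qed
  fix a b assume a: "a \<in> V" and b: "b \<in> V"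
  show "dist ?E (Inl a) (Inl b) = dist E a b" by (rule deq)
  fix p assume sp: "shortest_path ?E (Inl a) p (Inl b)"
  show "set p \<inter> web_inner_vertices v r = {}"
  proof (rule ccontr)
    assume "set p \<inter> web_inner_vertices v r \<noteq> {}"
    then obtain x where x: "x \<in> set p" "x \<in> web_inner_vertices v r" by blast
    then obtain i j where "x = web_vtx v r i j" "0 < j" by (auto simp: web_inner_vertices_def)
    then obtain z where "x = Inr z" using wv_Inr by blast
    with x have ex: "\<exists>z. Inr z \<in> set p" by blast
    have w: "walk_betw ?E (Inl a) p (Inl b)" using sp by (simp add: shortest_path_def)
    obtain q where q: "walk_betw E a q b" "length q < length p"
      using main2[OF G r walk w] ex by blast
    have "q \<noteq> []" using q(1) by (simp add: walk_betw_def)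
    then have lt: "enat (length q - 1) < enat (length p - 1)" proof -
      have "length q \<noteq> 0" using \<open>q \<noteq> []\<close> by simp
      then have "length q - 1 < length p - 1" using q(2) by arith
      then show ?thesis by simp
    qed
    have "dist E a b \<le> enat (length q - 1)" unfolding dist_def
      by (rule INF_lower) (use q(1) in simp)
    also have "\<dots> < enat (length p - 1)" by (rule lt)
    also have "\<dots> = dist E a b" using sp deq by (simp add: shortest_path_def)
    finally show False by simp
  qed
next
  let ?E = "attach_web_E E v r"
  fix x assume "x \<in> web_vertices v r"
  then obtain i j where ij: "i < r" "j \<le> r" "x = web_vtx v r i j" by (auto simp: web_vertices_def)
  have vi: "v i \<in> V" using vV[OF G r walk ij(1)] .
  define p where "p = map (\<lambda>t. web_vtx v r i t) [0..<Suc j]"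
  have "walk_betw ?E (Inl (v i)) p x"
    unfolding walk_betw_def
  proof (intro conjI allI impI)
    show "p \<noteq> []" by (simp add: p_def)
    show "hd p = Inl (v i)" using ij by (simp add: p_def web_vtx_def upt_conv_Cons del: upt_Suc)
    show "last p = x" using ij by (simp add: p_def)
    fix t assume "Suc t < length p"
    then have t: "t < j" by (simp add: p_def)
    have "web_edge v r (web_vtx v r i t) (web_vtx v r i (Suc t))"
      unfolding web_edge_def using ij t by (intro disjI1 exI[of _ i] exI[of _ t]) auto
    then show "?E (p ! t) (p ! Suc t)"
      using t by (simp add: p_def attach_web_E_def nth_append del: upt_Suc)
  qed
  then have "dist ?E (Inl (v i)) x \<le> enat (length p - 1)"
    unfolding dist_def by (intro INF_lower) simp
  also have "\<dots> \<le> enat r" using ij by (simp add: p_def)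
  finally show "\<exists>a\<in>V. dist ?E (Inl a) x \<le> enat r" using vi by blast
qed

end
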